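(* Let $\Delta\subseteq\Sigma$ for a finite alphabet $\Sigma$, and let $L\subseteq\Sigma^\omega$ be an aperiodic language such that each string in $L$ contains exactly one occurrence of a symbol from $\Delta$. Then $L$ can be written as a finite union of disjoint languages $R_\ell\, a\, R_r$ where $a\in\Delta$, $R_\ell\subseteq(\Sigma\setminus\Delta)^*$ and $R_r\subseteq(\Sigma\setminus\Delta)^\omega$. Moreover $R_\ell$ and $R_r$ are aperiodic.
   Context: A finite monoid $M$ is aperiodic if there is $n$ with $x^n=x^{n+1}$ for all $x\in M$. A language $K\subseteq\Sigma^*$ is aperiodic if it is recognized by a morphism $h:\Sigma^*\to M$ to a finite aperiodic monoid (i.e. $K=h^{-1}(h(K))$). For $\omega$-languages: given a morphism $h:\Sigma^*\to M$ to a finite monoid, $\omega$-strings $u,v$ are $h$-similar if they factor as $u=u_1u_2\cdots$, $v=v_1v_2\cdots$ with $u_i,v_i\in\Sigma^+$ and $h(u_i)=h(v_i)$; let $\cong$ be its transitive closure; $h$ recognizes $L\subseteq\Sigma^\omega$ if $w\in L$ and $u\cong w$ imply $u\in L$; $L$ is aperiodic if recognized by a morphism to a finite aperiodic monoid. *)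

theory Defs
  imports Main
begin

text \<open>A finite monoid is represented explicitly by a carrier set of naturals
  (every finite monoid is isomorphic to one whose carrier is a finite set of naturals),
  a multiplication and a unit.\<close>

definition finite_aperiodic_monoid :: "nat set \<Rightarrow> (nat \<Rightarrow> nat \<Rightarrow> nat) \<Rightarrow> nat \<Rightarrow> bool" where
  "finite_aperiodic_monoid M mult e \<longleftrightarrow>
     finite M \<and> e \<in> M \<and>
     (\<forall>x\<in>M. \<forall>y\<in>M. mult x y \<in> M) \<and>
     (\<forall>x\<in>M. \<forall>y\<in>M. \<forall>z\<in>M. mult (mult x y) z = mult x (mult y z)) \<and>
     (\<forall>x\<in>M. mult e x = x \<and> mult x e = x) \<and>
     (\<exists>n. \<forall>x\<in>M. (mult x ^^ n) e = (mult x ^^ Suc n) e)"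

definition monoid_morphism :: "'a set \<Rightarrow> ('a list \<Rightarrow> nat) \<Rightarrow> nat set \<Rightarrow> (nat \<Rightarrow> nat \<Rightarrow> nat) \<Rightarrow> nat \<Rightarrow> bool" where
  "monoid_morphism A h M mult e \<longleftrightarrow>
     h [] = e \<and>
     (\<forall>xs\<in>lists A. h xs \<in> M) \<and>
     (\<forall>xs\<in>lists A. \<forall>ys\<in>lists A. h (xs @ ys) = mult (h xs) (h ys))"

definition aperiodic_lang :: "'a set \<Rightarrow> 'a list set \<Rightarrow> bool" where
  "aperiodic_lang A K \<longleftrightarrow> K \<subseteq> lists A \<and>
     (\<exists>M mult e h. finite_aperiodic_monoid M mult e \<and> monoid_morphism A h M mult e \<and>
        K = {w \<in> lists A. h w \<in> h ` K})"

definition omega_words :: "'a set \<Rightarrow> (nat \<Rightarrow> 'a) set" where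
  "omega_words A = {w. range w \<subseteq> A}"

text \<open>u and v are h-similar: factorizations u = u_0 u_1 ..., v = v_0 v_1 ... into
  nonempty finite factors (given by strictly increasing cut points starting at 0)
  with h(u_i) = h(v_i).\<close>
definition h_similar :: "('a list \<Rightarrow> nat) \<Rightarrow> (nat \<Rightarrow> 'a) \<Rightarrow> (nat \<Rightarrow> 'a) \<Rightarrow> bool" where
  "h_similar h u v \<longleftrightarrow>
     (\<exists>f g :: nat \<Rightarrow> nat. strict_mono f \<and> strict_mono g \<and> f 0 = 0 \<and> g 0 = 0 \<and>
        (\<forall>i. h (map u [f i..<f (Suc i)]) = h (map v [g i..<g (Suc i)])))"

definition h_cong :: "'a set \<Rightarrow> ('a list \<Rightarrow> nat) \<Rightarrow> (nat \<Rightarrow> 'a) \<Rightarrow> (nat \<Rightarrow> 'a) \<Rightarrow> bool" where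
  "h_cong A h = (\<lambda>u v. u \<in> omega_words A \<and> v \<in> omega_words A \<and> h_similar h u v)\<^sup>+\<^sup>+"

definition recognizes_omega :: "'a set \<Rightarrow> ('a list \<Rightarrow> nat) \<Rightarrow> (nat \<Rightarrow> 'a) set \<Rightarrow> bool" where
  "recognizes_omega A h L \<longleftrightarrow> (\<forall>w\<in>L. \<forall>u. h_cong A h u w \<longrightarrow> u \<in> L)"

definition aperiodic_omega_lang :: "'a set \<Rightarrow> (nat \<Rightarrow> 'a) set \<Rightarrow> bool" where
  "aperiodic_omega_lang A L \<longleftrightarrow> L \<subseteq> omega_words A \<and>
     (\<exists>M mult e h. finite_aperiodic_monoid M mult e \<and> monoid_morphism A h M mult e \<and>
        recognizes_omega A h L)"

definition conc_omega :: "'a list \<Rightarrow> (nat \<Rightarrow> 'a) \<Rightarrow> (nat \<Rightarrow> 'a)" where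
  "conc_omega xs w = (\<lambda>n. if n < length xs then xs ! n else w (n - length xs))"

definition lang_split :: "'a list set \<Rightarrow> 'a \<Rightarrow> (nat \<Rightarrow> 'a) set \<Rightarrow> (nat \<Rightarrow> 'a) set" where
  "lang_split Rl a Rr = {conc_omega (u @ [a]) v | u v. u \<in> Rl \<and> v \<in> Rr}"

end

theory Submission
  imports Defs
begin

lemma map_conc_prefix: "map (conc_omega p v) [0..<length p] = p"
  by (rule nth_equalityI) (auto simp: conc_omega_def)

lemma map_conc_shift: "map (conc_omega p v) [length p + i..<length p + j] = map v [i..<j]"
  by (rule nth_equalityI) (auto simp: conc_omega_def)

lemma sim_conc:
  assumes "h_similar h v v'" "p \<noteq> []" "q \<noteq> []" "h p = h q"
  shows "h_similar h (conc_omega p v) (conc_omega q v')"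
proof -
  obtain f g :: "nat \<Rightarrow> nat" where fg: "strict_mono f" "strict_mono g" "f 0 = 0" "g 0 = 0"
    "\<And>i. h (map v [f i..<f (Suc i)]) = h (map v' [g i..<g (Suc i)])"
    using assms(1) unfolding h_similar_def by blast
  define f' where "f' = (\<lambda>i. case i of 0 \<Rightarrow> 0 | Suc k \<Rightarrow> length p + f k)"
  define g' where "g' = (\<lambda>i. case i of 0 \<Rightarrow> 0 | Suc k \<Rightarrow> length q + g k)"
  have "strict_mono f'"
    unfolding strict_mono_Suc_iff
  proof
    fix i show "f' i < f' (Suc i)"
      using assms(2) fg(1,3) by (cases i) (auto simp: f'_def strict_mono_def)
  qed
  moreover have "strict_mono g'"
    unfolding strict_mono_Suc_iff
  proof
    fix i show "g' i < g' (Suc i)"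
      using assms(3) fg(2,4) by (cases i) (auto simp: g'_def strict_mono_def)
  qed
  moreover have "h (map (conc_omega p v) [f' i..<f' (Suc i)]) = h (map (conc_omega q v') [g' i..<g' (Suc i)])" for i
  proof (cases i)
    case 0
    then show ?thesis using assms(4) fg(3,4) map_conc_prefix[of p v] map_conc_prefix[of q v']
      by (simp add: f'_def g'_def)
  next
    case (Suc k)
    then show ?thesis using fg(5)[of k] by (simp add: f'_def g'_def map_conc_shift)
  qed
  ultimately show ?thesis unfolding h_similar_def by (intro exI[of _ f'] exI[of _ g']) (auto simp: f'_def g'_def)
qed

lemma sim_refl: "h_similar h v v"
  unfolding h_similar_def by (rule exI[of _ id], rule exI[of _ id]) (auto simp: strict_mono_def)

lemma conc_omega_words:
  assumes "set p \<subseteq> B" "v \<in> omega_words B"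
  shows "conc_omega p v \<in> omega_words B"
  using assms by (auto simp: omega_words_def conc_omega_def)

lemma cong_conc:
  assumes "h_cong A h x y" "A \<subseteq> B" "set p \<subseteq> B" "p \<noteq> []"
  shows "h_cong B h (conc_omega p x) (conc_omega p y)"
  using assms(1) unfolding h_cong_def
proof (induction rule: tranclp_induct)
  case (base y)
  then show ?case
  proof -
    have "x \<in> omega_words B" "y \<in> omega_words B" using base assms(2) by (auto simp: omega_words_def)
    then show ?case
    using sim_conc[of h x y p p] base assms conc_omega_words[of p B]
    by (intro tranclp.r_into_trancl) auto
  qed
next
  case (step y z)
  have "h_similar h (conc_omega p y) (conc_omega p z)" using sim_conc[of h y z p p] step assms by auto
  moreover have "y \<in> omega_words B" "z \<in> omega_words B" using step assms(2) by (auto simp: omega_words_def)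
  then have "conc_omega p y \<in> omega_words B" "conc_omega p z \<in> omega_words B"
    using assms conc_omega_words[of p B] by auto
  ultimately show ?case using step.IH tranclp.trancl_into_trancl[of _ "conc_omega p x" "conc_omega p y" "conc_omega p z"] by blast
qed

lemma cong_fst: "h_cong A h x y \<Longrightarrow> x \<in> omega_words A"
  unfolding h_cong_def by (induction rule: tranclp_induct) auto

lemma delta_pos:
  assumes "set u \<subseteq> \<Sigma> - \<Delta>" "a \<in> \<Delta>" "range v \<subseteq> \<Sigma> - \<Delta>"
  shows "conc_omega (u @ [a]) v n \<in> \<Delta> \<longleftrightarrow> n = length u"
proof -
  have "n < length u \<Longrightarrow> u ! n \<notin> \<Delta>" using assms(1) nth_mem by blast
  moreover have "v k \<notin> \<Delta>" for k using assms(3) by auto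
  ultimately show ?thesis using assms(2)
    by (auto simp: conc_omega_def nth_append not_less)
qed

lemma split_unique:
  assumes "conc_omega (u @ [a]) v = conc_omega (u' @ [a']) v'"
    "set u \<subseteq> \<Sigma> - \<Delta>" "a \<in> \<Delta>" "range v \<subseteq> \<Sigma> - \<Delta>"
    "set u' \<subseteq> \<Sigma> - \<Delta>" "a' \<in> \<Delta>" "range v' \<subseteq> \<Sigma> - \<Delta>"
  shows "u = u' \<and> a = a'"
proof -
  have "length u = length u'"
    using delta_pos[OF assms(2-4), of "length u"] delta_pos[OF assms(5-7), of "length u"] assms(1)
    by auto
  moreover have "u ! k = u' ! k" if "k < length u" for k
    using fun_cong[OF assms(1), of k] that \<open>length u = length u'\<close>
    by (simp add: conc_omega_def nth_append)
  ultimately have "u = u'" by (simp add: nth_equalityI)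
  moreover have "a = a'"
    using fun_cong[OF assms(1), of "length u"] \<open>length u = length u'\<close>
    by (simp add: conc_omega_def nth_append)
  ultimately show ?thesis by simp
qed

theorem mainTheorem8:
  fixes \<Sigma> \<Delta> :: "'a set" and L :: "(nat \<Rightarrow> 'a) set"
  assumes "finite \<Sigma>"
    and "\<Delta> \<subseteq> \<Sigma>"
    and "aperiodic_omega_lang \<Sigma> L"
    and "\<forall>w\<in>L. \<exists>!i. w i \<in> \<Delta>"
  shows "\<exists>parts :: ('a list set \<times> 'a \<times> (nat \<Rightarrow> 'a) set) list.
           L = (\<Union>(Rl, a, Rr)\<in>set parts. lang_split Rl a Rr) \<and>
           (\<forall>i<length parts. \<forall>j<length parts. i \<noteq> j \<longrightarrow>
              (case parts ! i of (Rl, a, Rr) \<Rightarrow> lang_split Rl a Rr) \<inter>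
              (case parts ! j of (Rl, a, Rr) \<Rightarrow> lang_split Rl a Rr) = {}) \<and>
           (\<forall>(Rl, a, Rr)\<in>set parts.
              a \<in> \<Delta> \<and> Rl \<subseteq> lists (\<Sigma> - \<Delta>) \<and> Rr \<subseteq> omega_words (\<Sigma> - \<Delta>) \<and>
              aperiodic_lang (\<Sigma> - \<Delta>) Rl \<and> aperiodic_omega_lang (\<Sigma> - \<Delta>) Rr)"
proof -
  obtain M mult e h where ap: "finite_aperiodic_monoid M mult e" and mor: "monoid_morphism \<Sigma> h M mult e"
    and rec: "recognizes_omega \<Sigma> h L" and Lsub: "L \<subseteq> omega_words \<Sigma>"
    using assms(3) unfolding aperiodic_omega_lang_def by blast
  have hM: "\<And>xs. xs \<in> lists \<Sigma> \<Longrightarrow> h xs \<in> M"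
    and hmult: "\<And>xs ys. xs \<in> lists \<Sigma> \<Longrightarrow> ys \<in> lists \<Sigma> \<Longrightarrow> h (xs @ ys) = mult (h xs) (h ys)"
    using mor unfolding monoid_morphism_def by auto
  have mor': "monoid_morphism (\<Sigma> - \<Delta>) h M mult e"
  proof -
    have "lists (\<Sigma> - \<Delta>) \<subseteq> lists \<Sigma>" by auto
    then show ?thesis using mor unfolding monoid_morphism_def by blast
  qed
  define Rl where "Rl m = {u \<in> lists (\<Sigma> - \<Delta>). h u = m}" for m
  define Rr where "Rr m a = {v \<in> omega_words (\<Sigma> - \<Delta>). \<exists>u\<in>lists (\<Sigma> - \<Delta>). h u = m \<and> conc_omega (u @ [a]) v \<in> L}" for m a
  have "finite (M \<times> \<Delta>)" using ap assms(1,2) finite_subset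
    unfolding finite_aperiodic_monoid_def by blast
  then obtain xs where xs: "set xs = M \<times> \<Delta>" "distinct xs" using finite_distinct_list by blast
  define parts where "parts = map (\<lambda>(m, a). (Rl m, a, Rr m a)) xs"
  have repl: "conc_omega (u @ [a]) v \<in> L"
    if "conc_omega (u' @ [a]) v \<in> L" "u \<in> lists \<Sigma>" "u' \<in> lists \<Sigma>" "h u = h u'" "a \<in> \<Sigma>"
      "v \<in> omega_words \<Sigma>" for u u' a v
  proof -
    have "h (u @ [a]) = h (u' @ [a])" using that hmult by auto
    then have "h_similar h (conc_omega (u @ [a]) v) (conc_omega (u' @ [a]) v)"
      using sim_conc[OF sim_refl, of "u @ [a]" "u' @ [a]" h v] by simp
    moreover have "conc_omega (u @ [a]) v \<in> omega_words \<Sigma>" "conc_omega (u' @ [a]) v \<in> omega_words \<Sigma>"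
      using that conc_omega_words[of "u @ [a]" \<Sigma> v] conc_omega_words[of "u' @ [a]" \<Sigma> v] by auto
    ultimately have "h_cong \<Sigma> h (conc_omega (u @ [a]) v) (conc_omega (u' @ [a]) v)"
      unfolding h_cong_def by (intro tranclp.r_into_trancl) auto
    then show ?thesis using rec that(1) unfolding recognizes_omega_def by blast
  qed
  have union: "L = (\<Union>(Rl, a, Rr)\<in>set parts. lang_split Rl a Rr)"
  proof
    show "L \<subseteq> (\<Union>(Rl, a, Rr)\<in>set parts. lang_split Rl a Rr)"
    proof
      fix w assume wL: "w \<in> L"
      then obtain i where i: "w i \<in> \<Delta>" and iu: "\<And>j. w j \<in> \<Delta> \<Longrightarrow> j = i" using assms(4) by blast
      have wS: "w n \<in> \<Sigma>" for n using wL Lsub by (auto simp: omega_words_def)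
      define u where "u = map w [0..<i]"
      define v where "v = (\<lambda>n. w (n + Suc i))"
      have u: "u \<in> lists (\<Sigma> - \<Delta>)" using wS iu by (auto simp: u_def)
      have v: "v \<in> omega_words (\<Sigma> - \<Delta>)" using wS iu by (fastforce simp: v_def omega_words_def)
      have weq: "conc_omega (u @ [w i]) v = w"
        by (rule ext) (auto simp: conc_omega_def u_def v_def nth_append intro: arg_cong[of _ _ w])
      have "(h u, w i) \<in> set xs" using xs hM u i by auto
      moreover have "w \<in> lang_split (Rl (h u)) (w i) (Rr (h u) (w i))"
        unfolding lang_split_def using u v weq wL by (auto simp: Rl_def Rr_def intro!: exI[of _ u] exI[of _ v])
      ultimately show "w \<in> (\<Union>(Rl, a, Rr)\<in>set parts. lang_split Rl a Rr)"
        unfolding parts_def by force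
    qed
  next
    show "(\<Union>(Rl, a, Rr)\<in>set parts. lang_split Rl a Rr) \<subseteq> L"
    proof (clarsimp simp: parts_def)
      fix m a w assume ma: "(m, a) \<in> set xs" and w: "w \<in> lang_split (Rl m) a (Rr m a)"
      then obtain u v where w: "w = conc_omega (u @ [a]) v" "u \<in> Rl m" "v \<in> Rr m a"
        unfolding lang_split_def by blast
      then obtain u' where u': "u' \<in> lists (\<Sigma> - \<Delta>)" "h u' = m" "conc_omega (u' @ [a]) v \<in> L"
        unfolding Rr_def by blast
      have "a \<in> \<Sigma>" using ma xs assms(2) by auto
      moreover have "v \<in> omega_words \<Sigma>" using w(3) by (auto simp: Rr_def omega_words_def)
      ultimately show "w \<in> L" using repl[OF u'(3), of u] w u' by (auto simp: Rl_def)
    qed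
  qed
  have disj: "\<forall>i<length parts. \<forall>j<length parts. i \<noteq> j \<longrightarrow>
              (case parts ! i of (Rl, a, Rr) \<Rightarrow> lang_split Rl a Rr) \<inter>
              (case parts ! j of (Rl, a, Rr) \<Rightarrow> lang_split Rl a Rr) = {}"
  proof (intro allI impI)
    fix i j assume ij: "i < length parts" "j < length parts" "i \<noteq> j"
    obtain m a where mi: "xs ! i = (m, a)" by fastforce
    obtain m' a' where mj: "xs ! j = (m', a')" by fastforce
    have ne: "(m, a) \<noteq> (m', a')" using xs(2) ij mi mj nth_eq_iff_index_eq[OF xs(2), of i j] by (auto simp: parts_def)
    have "lang_split (Rl m) a (Rr m a) \<inter> lang_split (Rl m') a' (Rr m' a') = {}"
    proof (rule ccontr)
      assume "\<not> ?thesis"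
      then obtain u v u' v' where eq: "conc_omega (u @ [a]) v = conc_omega (u' @ [a']) v'"
        and h: "u \<in> Rl m" "v \<in> Rr m a" "u' \<in> Rl m'" "v' \<in> Rr m' a'"
        unfolding lang_split_def by blast
      have "a \<in> \<Delta>" "a' \<in> \<Delta>" using ij mi mj xs(1) nth_mem unfolding parts_def
        by (metis length_map mem_Sigma_iff)+
      then have "u = u' \<and> a = a'"
        using split_unique[OF eq, of \<Sigma> \<Delta>] h by (auto simp: Rl_def Rr_def omega_words_def)
      then show False using ne h by (auto simp: Rl_def)
    qed
    then show "(case parts ! i of (Rl, a, Rr) \<Rightarrow> lang_split Rl a Rr) \<inter>
              (case parts ! j of (Rl, a, Rr) \<Rightarrow> lang_split Rl a Rr) = {}"
      using ij mi mj by (simp add: parts_def)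
  qed
  have props: "\<forall>(Rl', a, Rr')\<in>set parts.
              a \<in> \<Delta> \<and> Rl' \<subseteq> lists (\<Sigma> - \<Delta>) \<and> Rr' \<subseteq> omega_words (\<Sigma> - \<Delta>) \<and>
              aperiodic_lang (\<Sigma> - \<Delta>) Rl' \<and> aperiodic_omega_lang (\<Sigma> - \<Delta>) Rr'"
  proof (clarsimp simp: parts_def)
    fix m a assume ma: "(m, a) \<in> set xs"
    have a: "a \<in> \<Delta>" using ma xs by auto
    have l1: "Rl m \<subseteq> lists (\<Sigma> - \<Delta>)" by (auto simp: Rl_def)
    have r1: "Rr m a \<subseteq> omega_words (\<Sigma> - \<Delta>)" by (auto simp: Rr_def)
    have "Rl m = {w \<in> lists (\<Sigma> - \<Delta>). h w \<in> h ` Rl m}" by (auto simp: Rl_def)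
    then have l2: "aperiodic_lang (\<Sigma> - \<Delta>) (Rl m)"
      unfolding aperiodic_lang_def using l1 ap mor' by blast
    have "recognizes_omega (\<Sigma> - \<Delta>) h (Rr m a)"
      unfolding recognizes_omega_def
    proof (intro ballI allI impI)
      fix v v' assume v: "v \<in> Rr m a" and c: "h_cong (\<Sigma> - \<Delta>) h v' v"
      then obtain u where u: "u \<in> lists (\<Sigma> - \<Delta>)" "h u = m" "conc_omega (u @ [a]) v \<in> L"
        unfolding Rr_def by blast
      have "set (u @ [a]) \<subseteq> \<Sigma>" using u a assms(2) by auto
      then have "h_cong \<Sigma> h (conc_omega (u @ [a]) v') (conc_omega (u @ [a]) v)"
        using cong_conc[OF c, of \<Sigma>] by auto
      then have "conc_omega (u @ [a]) v' \<in> L" using rec u(3) unfolding recognizes_omega_def by blast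
      moreover have "v' \<in> omega_words (\<Sigma> - \<Delta>)" using cong_fst[OF c] .
      ultimately show "v' \<in> Rr m a" using u unfolding Rr_def by blast
    qed
    then have r2: "aperiodic_omega_lang (\<Sigma> - \<Delta>) (Rr m a)"
      unfolding aperiodic_omega_lang_def using r1 ap mor' by blast
    show "a \<in> \<Delta> \<and> Rl m \<subseteq> lists (\<Sigma> - \<Delta>) \<and> Rr m a \<subseteq> omega_words (\<Sigma> - \<Delta>) \<and>
          aperiodic_lang (\<Sigma> - \<Delta>) (Rl m) \<and> aperiodic_omega_lang (\<Sigma> - \<Delta>) (Rr m a)"
      using a l1 r1 l2 r2 by blast
  qed
  show ?thesis using union disj props by blast
qed

end
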